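(* Let $F(x,y)=\sum_{i=0}^2\sum_{j=0}^2 c_{i,j}x^iy^j=Y_0(y)+xY_1(y)+x^2Y_2(y)$ be a biquadratic polynomial. Define $$\mathcal R(\Sigma,\Pi)=\operatorname{Res}_y\big(\Sigma\,Y_2(y)+Y_1(y),\ \Pi\,Y_2(y)-Y_0(y)\big),$$ the resultant (Sylvester $4\times4$ determinant) with respect to $y$ of these two polynomials of degree $\le 2$ in $y$. Then $\mathcal R$ is a polynomial of total degree at most $2$ in $(\Sigma,\Pi)$; i.e. the coefficients of $\Sigma^2\Pi^2$, $\Sigma^2\Pi$ and $\Sigma\Pi^2$ vanish. Consequently $E(x,z):=\mathcal R(x+z,xz)$ is a symmetric biquadratic polynomial, $E(x,z)=\sum_{i,j=0}^2 e_{i,j}x^iz^j$ with $e_{i,j}=e_{j,i}$, and for every elliptic sequence $(x_n,y_n)_{n\in\mathbb Z}$ on $F$ with $Y_2(y_n)\neq0$ for all $n$, one has $E(x_n,x_{n+1})=0$ for all $n\in\mathbb Z$.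
   Context: Write $Y_i(y)=\sum_{j=0}^2 c_{i,j}y^j$ and $X_j(x)=\sum_{i=0}^2 c_{i,j}x^i$, so that $F(x,y)=Y_0(y)+xY_1(y)+x^2Y_2(y)=X_0(x)+yX_1(x)+y^2X_2(x)$. An elliptic sequence on $F$ is a doubly infinite sequence of points $(x_n,y_n)_{n\in\mathbb Z}$ such that for every $n$, $x_n$ and $x_{n+1}$ are the two roots (with multiplicity) of the quadratic polynomial $x\mapsto F(x,y_n)$, and $y_{n-1}$ and $y_n$ are the two roots of $y\mapsto F(x_n,y)$. In particular $F(x_n,y_n)=F(x_{n+1},y_n)=0$, $x_n+x_{n+1}=-Y_1(y_n)/Y_2(y_n)$ and $x_nx_{n+1}=Y_0(y_n)/Y_2(y_n)$ whenever $Y_2(y_n)\ne0$. *)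

theory Defs
  imports "HOL-Combinatorics.Permutations" "HOL-Computational_Algebra.Polynomial"
begin

definition Ycoef :: "(nat \<Rightarrow> nat \<Rightarrow> 'a::comm_ring_1) \<Rightarrow> nat \<Rightarrow> 'a \<Rightarrow> 'a" where
  "Ycoef c i y = (\<Sum>j\<le>2. c i j * y ^ j)"

definition Xcoef :: "(nat \<Rightarrow> nat \<Rightarrow> 'a::comm_ring_1) \<Rightarrow> nat \<Rightarrow> 'a \<Rightarrow> 'a" where
  "Xcoef c j x = (\<Sum>i\<le>2. c i j * x ^ i)"

definition Fbq :: "(nat \<Rightarrow> nat \<Rightarrow> 'a::comm_ring_1) \<Rightarrow> 'a \<Rightarrow> 'a \<Rightarrow> 'a" where
  "Fbq c x y = (\<Sum>i\<le>2. \<Sum>j\<le>2. c i j * x ^ i * y ^ j)"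

definition two_roots :: "'a::field poly \<Rightarrow> 'a \<Rightarrow> 'a \<Rightarrow> bool" where
  "two_roots q u v \<longleftrightarrow> degree q = 2 \<and> q = smult (lead_coeff q) ([:-u, 1:] * [:-v, 1:])"

definition elliptic_seq :: "(nat \<Rightarrow> nat \<Rightarrow> 'a::field) \<Rightarrow> (int \<Rightarrow> 'a) \<Rightarrow> (int \<Rightarrow> 'a) \<Rightarrow> bool" where
  "elliptic_seq c xs ys \<longleftrightarrow>
     (\<forall>n. two_roots [:Ycoef c 0 (ys n), Ycoef c 1 (ys n), Ycoef c 2 (ys n):] (xs n) (xs (n + 1))
        \<and> two_roots [:Xcoef c 0 (xs n), Xcoef c 1 (xs n), Xcoef c 2 (xs n):] (ys (n - 1)) (ys n))"

definition det4 :: "(nat \<Rightarrow> nat \<Rightarrow> 'b::comm_ring_1) \<Rightarrow> 'b" where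
  "det4 M = (\<Sum>p | p permutes {..<4}. of_int (sign p) * (\<Prod>i<4. M i (p i)))"

definition sylv2 :: "'b \<Rightarrow> 'b \<Rightarrow> 'b \<Rightarrow> 'b \<Rightarrow> 'b \<Rightarrow> 'b \<Rightarrow> nat \<Rightarrow> nat \<Rightarrow> 'b::zero" where
  "sylv2 a0 a1 a2 b0 b1 b2 i j =
     (if i = 0 then [a2, a1, a0, 0] ! j
      else if i = 1 then [0, a2, a1, a0] ! j
      else if i = 2 then [b2, b1, b0, 0] ! j
      else [0, b2, b1, b0] ! j)"

definition res2 :: "'b \<Rightarrow> 'b \<Rightarrow> 'b \<Rightarrow> 'b \<Rightarrow> 'b \<Rightarrow> 'b \<Rightarrow> 'b::comm_ring_1" where
  "res2 a0 a1 a2 b0 b1 b2 = det4 (sylv2 a0 a1 a2 b0 b1 b2)"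

text \<open>R(Sigma,Pi) as a bivariate polynomial: outer variable Sigma, inner variable Pi,
  so the coefficient of Sigma^i Pi^j is coeff (coeff R i) j.\<close>
definition Rpoly :: "(nat \<Rightarrow> nat \<Rightarrow> 'a::comm_ring_1) \<Rightarrow> 'a poly poly" where
  "Rpoly c = (let S = [:0, 1:]; P = [:[:0, 1:]:]; K = (\<lambda>a. [:[:a:]:]) in
     res2 (S * K (c 2 0) + K (c 1 0)) (S * K (c 2 1) + K (c 1 1)) (S * K (c 2 2) + K (c 1 2))
          (P * K (c 2 0) - K (c 0 0)) (P * K (c 2 1) - K (c 0 1)) (P * K (c 2 2) - K (c 0 2)))"

text \<open>E(x,z) = R(x+z, xz) as a bivariate polynomial: inner variable x, outer variable z,
  so the coefficient of x^i z^j is coeff (coeff E j) i.\<close>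
definition Epoly :: "(nat \<Rightarrow> nat \<Rightarrow> 'a::comm_ring_1) \<Rightarrow> 'a poly poly" where
  "Epoly c = (let X = [:[:0, 1:]:]; Z = [:0, 1:] in
     poly (map_poly (\<lambda>q. poly (map_poly (\<lambda>a. [:[:a:]:]) q) (X * Z)) (Rpoly c)) (X + Z))"

definition Eval :: "(nat \<Rightarrow> nat \<Rightarrow> 'a::comm_ring_1) \<Rightarrow> 'a \<Rightarrow> 'a \<Rightarrow> 'a" where
  "Eval c x z = poly (poly (Epoly c) [:z:]) x"

end

theory Submission
  imports Defs
begin


lemma sum_perm_sign_insert:
  assumes "finite S" "a \<notin> S"
  shows "(\<Sum>p | p permutes insert a S. of_int (sign p) * g p) =
    (\<Sum>b\<in>insert a S. of_int (sign (transpose a b)) * (\<Sum>q | q permutes S. of_int (sign q) * g (transpose a b \<circ> q)) :: 'b::comm_ring_1)"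
proof -
  have "(\<Sum>p | p permutes insert a S. of_int (sign p) * g p) =
    (\<Sum>b\<in>insert a S. \<Sum>q | q permutes S. of_int (sign (transpose a b \<circ> q)) * g (transpose a b \<circ> q) :: 'b)"
    by (rule sum_over_permutations_insert[OF assms])
  also have "\<dots> = (\<Sum>b\<in>insert a S. \<Sum>q | q permutes S. of_int (sign (transpose a b)) * (of_int (sign q) * g (transpose a b \<circ> q)))"
    apply (intro sum.cong refl)
    apply (subst sign_compose)
      apply (simp add: permutation_swap_id)
     apply (metis assms(1) mem_Collect_eq permutation_permutes)
    apply simp
    done
  finally show ?thesis by (simp add: sum_distrib_left)
qed

lemma perm_empty_set: "{p. p permutes ({}::nat set)} = {id}"
  by (auto simp: permutes_empty)

lemma perm4: "(\<Sum>p | p permutes {..<4::nat}. of_int (sign p) * g p) =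
  (\<Sum>b0\<in>{0,1,2,3}. of_int (sign (transpose 0 b0)) * (\<Sum>b1\<in>{1,2,3}. of_int (sign (transpose 1 b1)) * (\<Sum>b2\<in>{2,3::nat}.
     of_int (sign (transpose 2 b2)) *
     g (transpose 0 b0 \<circ> (transpose 1 b1 \<circ> transpose 2 b2)))) :: 'b::comm_ring_1)"
proof -
  have e: "{..<4::nat} = insert 0 (insert 1 (insert 2 (insert 3 {})))" by auto
  have s3: "(\<Sum>q | q permutes insert (3::nat) {}. of_int (sign q) * h q) = (h id :: 'b)" for h
    by (subst sum_perm_sign_insert) (auto simp: perm_empty_set)
  have s2: "(\<Sum>q | q permutes insert (2::nat) (insert 3 {}). of_int (sign q) * h q) =
     (\<Sum>b2\<in>{2,3}. of_int (sign (transpose 2 b2)) * h (transpose 2 b2) :: 'b)" for h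
    by (subst sum_perm_sign_insert) (simp_all only: s3 comp_id, auto)
  have s1: "(\<Sum>q | q permutes insert (1::nat) (insert 2 (insert 3 {})). of_int (sign q) * h q) =
     (\<Sum>b1\<in>{1,2,3}. of_int (sign (transpose 1 b1)) * (\<Sum>b2\<in>{2,3}. of_int (sign (transpose 2 b2)) * h (transpose 1 b1 \<circ> transpose 2 b2)) :: 'b)" for h
    by (subst sum_perm_sign_insert) (simp_all only: s2, auto)
  show ?thesis unfolding e
    by (subst sum_perm_sign_insert) (simp_all only: s1, auto)
qed

lemma res2_formula: "res2 a0 a1 a2 b0 b1 b2 = (a2*b0-a0*b2)^2 - (a2*b1-a1*b2)*(a1*b0-a0*b1)"
  unfolding res2_def det4_def perm4
  apply (simp add: sign_swap_id transpose_def sylv2_def lessThan_Suc_eq_insert_0 prod.insert numeral_eq_Suc)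
  apply (simp add: algebra_simps power2_eq_square)
  done

definition Kc :: "'a::comm_ring_1 \<Rightarrow> 'a poly poly" where "Kc a = [:[:a:]:]"

lemma Kc_add[simp]: "Kc (a + b) = Kc a + Kc b" by (simp add: Kc_def)
lemma Kc_diff[simp]: "Kc (a - b) = Kc a - Kc b" by (simp add: Kc_def)
lemma Kc_mult[simp]: "Kc (a * b) = Kc a * Kc b" by (simp add: Kc_def)
lemma Kc_0[simp]: "Kc 0 = 0" by (simp add: Kc_def)

definition rr :: "(nat \<Rightarrow> 'b::comm_ring_1) \<Rightarrow> (nat \<Rightarrow> 'b) \<Rightarrow> (nat \<Rightarrow> 'b) \<Rightarrow> nat \<Rightarrow> nat \<Rightarrow> 'b" where
  "rr A B C i j = (let al = (\<lambda>k l. A l * C k - A k * C l); be = (\<lambda>k l. B k * A l - B l * A k);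
      ga = (\<lambda>k l. B l * C k - B k * C l) in
    if i = 2 \<and> j = 0 then al 2 0 * al 2 0 - al 2 1 * al 1 0
    else if i = 0 \<and> j = 2 then be 2 0 * be 2 0 - be 2 1 * be 1 0
    else if i = 1 \<and> j = 1 then al 2 0 * be 2 0 + al 2 0 * be 2 0 - (al 2 1 * be 1 0 + be 2 1 * al 1 0)
    else if i = 1 \<and> j = 0 then al 2 0 * ga 2 0 + al 2 0 * ga 2 0 - (al 2 1 * ga 1 0 + ga 2 1 * al 1 0)
    else if i = 0 \<and> j = 1 then be 2 0 * ga 2 0 + be 2 0 * ga 2 0 - (be 2 1 * ga 1 0 + ga 2 1 * be 1 0)
    else if i = 0 \<and> j = 0 then ga 2 0 * ga 2 0 - ga 2 1 * ga 1 0
    else 0)"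

lemma rr_zero: "2 < i + j \<Longrightarrow> rr A B C i j = 0"
  by (auto simp: rr_def Let_def)

lemma sum3: "(\<Sum>i\<le>2::nat. f i) = f 0 + f 1 + f 2"
  by (simp add: numeral_2_eq_2 atMost_Suc add_ac)

lemma gen: "res2 (s*A 0 + B 0) (s*A 1+B 1) (s*A 2+B 2) (p*A 0 - C 0) (p*A 1 - C 1) (p*A 2 - C 2)
   = (\<Sum>i\<le>2. \<Sum>j\<le>2. rr A B C i j * s^i * p^j)"
  unfolding res2_formula sum3 by (simp add: rr_def Let_def power2_eq_square algebra_simps)

lemma Kc_rr: "Kc (rr A B C i j) = rr (\<lambda>k. Kc (A k)) (\<lambda>k. Kc (B k)) (\<lambda>k. Kc (C k)) i j"
  by (simp only: rr_def Let_def if_distrib[of Kc] Kc_add Kc_diff Kc_mult Kc_0)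


lemma monom_KSP: "monom (monom a j) i = Kc a * [:0,1:]^i * [:[:0,1:]:]^j"
proof -
  have 1: "[:0,1:] = (monom 1 1 :: 'a poly poly)" by (simp add: monom_Suc monom_0)
  have 2: "[:[:0,1:]:] = (monom (monom 1 1) 0 :: 'a poly poly)" by (simp add: monom_Suc monom_0)
  have 3: "Kc a = monom (monom a 0) 0" by (simp add: Kc_def monom_0)
  show ?thesis unfolding 1 2 3 by (simp add: monom_power mult_monom)
qed

lemma coeff_RR: "coeff (coeff (\<Sum>i\<le>2. \<Sum>j\<le>2. monom (monom (r i j) j) i) i) j = (if i\<le>2 \<and> j\<le>2 then r i j else 0)"
  by (auto simp: sum3 coeff_monom le_Suc_eq numeral_2_eq_2)

lemma Rpoly_eq: "Rpoly c = (\<Sum>i\<le>2. \<Sum>j\<le>2. monom (monom (rr (\<lambda>k. c 2 k) (\<lambda>k. c 1 k) (\<lambda>k. c 0 k) i j) j) i)"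
proof -
  have "Rpoly c = res2 ([:0,1:] * Kc (c 2 0) + Kc (c 1 0)) ([:0,1:] * Kc (c 2 1) + Kc (c 1 1)) ([:0,1:] * Kc (c 2 2) + Kc (c 1 2))
     ([:[:0,1:]:] * Kc (c 2 0) - Kc (c 0 0)) ([:[:0,1:]:] * Kc (c 2 1) - Kc (c 0 1)) ([:[:0,1:]:] * Kc (c 2 2) - Kc (c 0 2))"
    by (simp add: Rpoly_def Kc_def)
  also have "\<dots> = (\<Sum>i\<le>2. \<Sum>j\<le>2. rr (\<lambda>k. Kc (c 2 k)) (\<lambda>k. Kc (c 1 k)) (\<lambda>k. Kc (c 0 k)) i j * [:0,1:]^i * [:[:0,1:]:]^j)"
    using gen[of "[:0,1:]" "\<lambda>k. Kc (c 2 k)" "\<lambda>k. Kc (c 1 k)" "[:[:0,1:]:]" "\<lambda>k. Kc (c 0 k)"] by simp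
  also have "\<dots> = (\<Sum>i\<le>2. \<Sum>j\<le>2. monom (monom (rr (\<lambda>k. c 2 k) (\<lambda>k. c 1 k) (\<lambda>k. c 0 k) i j) j) i)"
    by (simp only: monom_KSP Kc_rr)
  finally show ?thesis .
qed

lemma part1: "2 < i + j \<Longrightarrow> coeff (coeff (Rpoly c) i) j = 0"
  unfolding Rpoly_eq coeff_RR by (simp add: rr_zero)



definition ee :: "(nat \<Rightarrow> nat \<Rightarrow> 'b::comm_ring_1) \<Rightarrow> nat \<Rightarrow> nat \<Rightarrow> 'b" where
  "ee r i j = (let a = min i j; b = max i j in
     if a = 0 \<and> b = 0 then r 0 0
     else if a = 0 \<and> b = 1 then r 1 0
     else if a = 0 \<and> b = 2 then r 2 0
     else if a = 1 \<and> b = 1 then r 0 1 + r 2 0 + r 2 0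
     else if a = 1 \<and> b = 2 then r 1 1
     else if a = 2 \<and> b = 2 then r 0 2 else 0)"

lemma ee_sym: "ee r i j = ee r j i"
  unfolding ee_def by (simp only: min.commute max.commute)

lemma Kc_ee: "Kc (ee r i j) = ee (\<lambda>i j. Kc (r i j)) i j"
  by (simp only: ee_def Let_def if_distrib[of Kc] Kc_add Kc_0)

lemma G0: "(r00::'b::comm_ring_1) + r10*(x+z) + r01*(x*z) + r20*((x+z)*(x+z)) + r11*((x+z)*(x*z)) + r02*((x*z)*(x*z))
   = r00 + r10*x + r10*z + r20*(x*x) + r20*(z*z) + (r01 + r20 + r20)*(x*z) + r11*(x*x*z) + r11*(x*(z*z)) + r02*(x*x*(z*z))"
  by (simp add: algebra_simps)

lemma G1: assumes "r 2 1 = 0" "r 1 2 = 0" "r 2 2 = 0" shows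
  "(\<Sum>i\<le>2. \<Sum>j\<le>2. r i j * (x+z)^i * (x*z)^j) = r 0 0 + r 1 0*(x+z) + r 0 1*(x*z) + r 2 0*((x+z)*(x+z)) + r 1 1*((x+z)*(x*z)) + r 0 2*((x*z)*(x*z :: 'b::comm_ring_1))"
proof -
  have a: "r (Suc 0) 2 = 0" "r 2 (Suc 0) = 0" using assms by simp_all
  show ?thesis using assms a by (simp add: sum3 power2_eq_square)
qed

lemma G3: "(r 0 0 + r 1 0*x + r 1 0*z + r 2 0*(x*x) + r 2 0*(z*z) + (r 0 1 + r 2 0 + r 2 0)*(x*z) + r 1 1*(x*x*z) + r 1 1*(x*(z*z)) + r 0 2*(x*x*(z*z)) :: 'b::comm_ring_1)
   = (\<Sum>i\<le>2. \<Sum>j\<le>2. ee r i j * x^i * z^j)"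
  by (simp add: sum3 ee_def power2_eq_square algebra_simps)

lemma G: assumes "r 2 1 = 0" "r 1 2 = 0" "r 2 2 = 0" shows
  "(\<Sum>i\<le>2. \<Sum>j\<le>2. r i j * (x+z)^i * (x*z)^j) = (\<Sum>i\<le>2. \<Sum>j\<le>2. ee r i j * x^i * z^j :: 'b::comm_ring_1)"
  unfolding G1[OF assms] G0 G3 ..

lemma map_poly_add': "f 0 = 0 \<Longrightarrow> (\<And>a b. f (a + b) = f a + f b) \<Longrightarrow> map_poly f (p + q) = map_poly f p + map_poly f q"
  by (intro poly_eqI) (simp add: coeff_map_poly)

lemma Epoly_eq: fixes c :: "nat \<Rightarrow> nat \<Rightarrow> 'a::comm_ring_1" shows "Epoly c = (\<Sum>i\<le>2. \<Sum>j\<le>2. monom (monom (ee (rr (\<lambda>k. c 2 k) (\<lambda>k. c 1 k) (\<lambda>k. c 0 k)) i j) i) j)"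
proof -
  define r where "r = rr (\<lambda>k. c 2 k) (\<lambda>k. c 1 k) (\<lambda>k. c 0 k)"
  have K: "(\<lambda>a. [:[:a:]:]) = Kc" by (simp add: Kc_def fun_eq_iff)
  have Ka: "map_poly Kc (p + q) = map_poly Kc p + map_poly Kc q" for p q :: "'a poly"
    by (rule map_poly_add') auto
  define f :: "'a poly \<Rightarrow> 'a poly poly" where "f = (\<lambda>q. poly (map_poly Kc q) ([:[:0,1:]:] * [:0,1:]))"
  have fa: "map_poly f (p + q) = map_poly f p + map_poly f q" for p q
    by (rule map_poly_add') (auto simp: f_def Ka)
  have fm: "map_poly f (monom (monom a j) i) = monom (Kc a * ([:[:0,1:]:] * [:0,1:])^j) i" for a i j
    by (subst map_poly_monom) (auto simp: f_def map_poly_monom poly_monom)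
  have "Epoly c = poly (map_poly f (Rpoly c)) ([:[:0,1:]:] + [:0,1:])"
    unfolding Epoly_def Let_def K f_def ..
  also have "\<dots> = (\<Sum>i\<le>2. \<Sum>j\<le>2. Kc (r i j) * ([:[:0,1:]:] + [:0,1:])^i * ([:[:0,1:]:] * [:0,1:])^j)"
    unfolding Rpoly_eq sum3 r_def
    by (simp only: fa fm poly_add poly_monom mult_ac)
  also have "\<dots> = (\<Sum>i\<le>2. \<Sum>j\<le>2. ee (\<lambda>i j. Kc (r i j)) i j * [:[:0,1:]:]^i * [:0,1:]^j)"
    by (rule G) (simp_all add: r_def rr_zero)
  also have "\<dots> = (\<Sum>i\<le>2. \<Sum>j\<le>2. monom (monom (ee r i j) i) j)"
    by (simp only: monom_KSP Kc_ee mult_ac)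
  finally show ?thesis unfolding r_def .
qed

lemma Eval_eq: "Eval c x z = (\<Sum>i\<le>2. \<Sum>j\<le>2. ee (rr (\<lambda>k. c 2 k) (\<lambda>k. c 1 k) (\<lambda>k. c 0 k)) i j * x^i * z^j)"
  unfolding Eval_def Epoly_eq by (simp add: poly_sum poly_monom)


lemma res_zero:
  assumes A: "a0 + a1*y + a2*y^2 = 0" and B: "b0 + b1*y + b2*y^2 = (0::'a::field)"
  shows "res2 a0 a1 a2 b0 b1 b2 = 0"
proof -
  have h1: "(a1*b2 - a2*b1)*y - (a2*b0 - a0*b2) = b2*(a0 + a1*y + a2*y^2) - a2*(b0 + b1*y + b2*y^2)"
    by (simp add: algebra_simps power2_eq_square)
  hence h1': "(a1*b2 - a2*b1)*y = a2*b0 - a0*b2" using A B by simp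
  have h2: "y*((a2*b0-a0*b2)*y - (a0*b1-a1*b0)) = b0*(a0 + a1*y + a2*y^2) - a0*(b0 + b1*y + b2*y^2)"
    by (simp add: algebra_simps power2_eq_square)
  hence h2': "y*((a2*b0-a0*b2)*y - (a0*b1-a1*b0)) = 0" using A B by simp
  show ?thesis
  proof (cases "y = 0")
    case True
    then have "a0 = 0" "b0 = 0" using A B by simp_all
    then show ?thesis by (simp add: res2_formula)
  next
    case False
    then have T: "a0*b1-a1*b0 = (a2*b0-a0*b2)*y" using h2' by simp
    have "res2 a0 a1 a2 b0 b1 b2 = (a2*b0-a0*b2)^2 - (a1*b2 - a2*b1)*(a0*b1-a1*b0)"
      by (simp add: res2_formula algebra_simps power2_eq_square)
    also have "\<dots> = (a2*b0-a0*b2)*((a2*b0-a0*b2) - (a1*b2 - a2*b1)*y)"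
      unfolding T by (simp add: algebra_simps power2_eq_square)
    also have "\<dots> = 0" using h1' by simp
    finally show ?thesis .
  qed
qed

lemma Ycoef3: "Ycoef c k y = c k 0 + c k 1 * y + c k 2 * y^2"
  by (simp add: Ycoef_def sum3)

lemma roots_coeffs:
  fixes Y0 Y1 Y2 u v :: "'a::field"
  assumes "two_roots [:Y0, Y1, Y2:] u v" "Y2 \<noteq> 0"
  shows "Y0 = Y2 * (u * v)" "Y1 = - (Y2 * (u + v))"
proof -
  have "lead_coeff [:Y0, Y1, Y2:] = Y2" using assms(2) by simp
  hence eq: "[:Y0, Y1, Y2:] = smult Y2 ([:-u, 1:] * [:-v, 1:])" using assms(1) unfolding two_roots_def by simp
  have "coeff [:Y0, Y1, Y2:] 0 = coeff (smult Y2 ([:-u, 1:] * [:-v, 1:])) 0" by (subst eq) (rule refl)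
  thus "Y0 = Y2 * (u * v)" by simp
  have "coeff [:Y0, Y1, Y2:] 1 = coeff (smult Y2 ([:-u, 1:] * [:-v, 1:])) 1" by (subst eq) (rule refl)
  thus "Y1 = - (Y2 * (u + v))" by (simp add: algebra_simps)
qed

lemma part3:
  fixes c :: "nat \<Rightarrow> nat \<Rightarrow> 'a::field"
  assumes "elliptic_seq c xs ys" "\<forall>n. Ycoef c 2 (ys n) \<noteq> 0"
  shows "Eval c (xs n) (xs (n + 1)) = 0"
proof -
  define u where "u = xs n"
  define v where "v = xs (n + 1)"
  define y where "y = ys n"
  have tr: "two_roots [:Ycoef c 0 y, Ycoef c 1 y, Ycoef c 2 y:] u v"
    using assms(1) unfolding elliptic_seq_def u_def v_def y_def by blast
  have nz: "Ycoef c 2 y \<noteq> 0" using assms(2) y_def by blast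
  note rc = roots_coeffs[OF tr nz]
  define r where "r = rr (\<lambda>k. c 2 k) (\<lambda>k. c 1 k) (\<lambda>k. c 0 k)"
  have "Eval c u v = (\<Sum>i\<le>2. \<Sum>j\<le>2. ee r i j * u^i * v^j)"
    unfolding Eval_eq r_def ..
  also have "\<dots> = (\<Sum>i\<le>2. \<Sum>j\<le>2. r i j * (u+v)^i * (u*v)^j)"
    by (rule G[symmetric]) (simp_all add: r_def rr_zero)
  also have "\<dots> = res2 ((u+v)*c 2 0 + c 1 0) ((u+v)*c 2 1 + c 1 1) ((u+v)*c 2 2 + c 1 2)
       ((u*v)*c 2 0 - c 0 0) ((u*v)*c 2 1 - c 0 1) ((u*v)*c 2 2 - c 0 2)"
    unfolding r_def by (rule gen[symmetric])
  also have "\<dots> = 0"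
  proof (rule res_zero[where y = y])
    show "(u + v) * c 2 0 + c 1 0 + ((u + v) * c 2 1 + c 1 1) * y + ((u + v) * c 2 2 + c 1 2) * y\<^sup>2 = 0"
    proof -
      have "(u + v) * c 2 0 + c 1 0 + ((u + v) * c 2 1 + c 1 1) * y + ((u + v) * c 2 2 + c 1 2) * y\<^sup>2
          = (u+v) * Ycoef c 2 y + Ycoef c 1 y" unfolding Ycoef3 by (simp add: algebra_simps)
      also have "\<dots> = 0" using rc(2) by simp
      finally show ?thesis .
    qed
    show "u * v * c 2 0 - c 0 0 + (u * v * c 2 1 - c 0 1) * y + (u * v * c 2 2 - c 0 2) * y\<^sup>2 = 0"
    proof -
      have "u * v * c 2 0 - c 0 0 + (u * v * c 2 1 - c 0 1) * y + (u * v * c 2 2 - c 0 2) * y\<^sup>2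
          = u * v * Ycoef c 2 y - Ycoef c 0 y" unfolding Ycoef3 by (simp add: algebra_simps)
      also have "\<dots> = 0" using rc(1) by simp
      finally show ?thesis .
    qed
  qed
  finally show ?thesis unfolding u_def v_def .
qed

theorem mainTheorem1:
  fixes c :: "nat \<Rightarrow> nat \<Rightarrow> 'a::field"
  shows "(\<forall>i j. 2 < i + j \<longrightarrow> coeff (coeff (Rpoly c) i) j = 0)
    \<and> (\<exists>e :: nat \<Rightarrow> nat \<Rightarrow> 'a. (\<forall>i j. e i j = e j i)
          \<and> Epoly c = (\<Sum>i\<le>2. \<Sum>j\<le>2. monom (monom (e i j) i) j))
    \<and> (\<forall>xs ys. elliptic_seq c xs ys \<and> (\<forall>n. Ycoef c 2 (ys n) \<noteq> 0)
          \<longrightarrow> (\<forall>n. Eval c (xs n) (xs (n + 1)) = 0))"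
proof (intro conjI allI impI)
  show "\<And>i j. 2 < i + j \<Longrightarrow> coeff (coeff (Rpoly c) i) j = 0" by (rule part1)
  show "\<exists>e :: nat \<Rightarrow> nat \<Rightarrow> 'a. (\<forall>i j. e i j = e j i)
          \<and> Epoly c = (\<Sum>i\<le>2. \<Sum>j\<le>2. monom (monom (e i j) i) j)"
    by (rule exI[of _ "ee (rr (\<lambda>k. c 2 k) (\<lambda>k. c 1 k) (\<lambda>k. c 0 k))"]) (simp add: ee_sym Epoly_eq)
  show "\<And>xs ys n. elliptic_seq c xs ys \<and> (\<forall>n. Ycoef c 2 (ys n) \<noteq> 0) \<Longrightarrow> Eval c (xs n) (xs (n + 1)) = 0"
    using part3 by blast
qed

end
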